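(* For all positive integers $m$ and all $r = 0,1,\ldots,m-1$, the number of rows of $H(r,m)$ is $$g(r,m) = \sum_{i=0}^{r} \binom{m-r-1+i}{i} 2^i.$$
   Context: All matrices are binary. The matrices $G(r,m)$, $0\le r\le m$, are defined recursively by $G(m,m) = I_{2^m}$, $G(0,m) = (11\cdots1)$ (length $2^m$), and for $0<r<m$, $G(r,m) = \begin{pmatrix} G(r,m-1) & G(r,m-1) \\ \mathbf{0} & G(r-1,m-1)\end{pmatrix}$ (so $G(m-1,m)$ has $2^m-1$ rows). The matrices $H(r,m)$ are defined by: for all $m \ge 0$, $H(0,m) = (11\cdots1)$ (length $2^m$), $H(m-1,m) = G(m-1,m)$, $H(m,m) = I_{2^m}$; and for all positive integers $m$ and $r = 1,\ldots,m-2$, $$H(r,m) = \begin{pmatrix} H(r,m-1) & H(r,m-1) \\ \mathbf{0} & H(r-1,m-1) \\ H(r-1,m-1) & \mathbf{0}\end{pmatrix}.$$ *)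

theory Defs
  imports Main
begin

text \<open>Binary matrices are represented as lists of rows; each row is a list of booleans
  (True = 1, False = 0). The number of rows of a matrix M is length M.\<close>

definition ident :: "nat \<Rightarrow> bool list list" where
  "ident n = map (\<lambda>i. map (\<lambda>j. i = j) [0..<n]) [0..<n]"

definition ones_row :: "nat \<Rightarrow> bool list list" where
  "ones_row n = [replicate n True]"

fun G :: "nat \<Rightarrow> nat \<Rightarrow> bool list list" where
  "G r m = (if r = m then ident (2^m)
            else if r = 0 then ones_row (2^m)
            else if r < m then
              (let A = G r (m-1); B = G (r-1) (m-1) in
                 map (\<lambda>x. x @ x) A @ map (\<lambda>y. replicate (2^(m-1)) False @ y) B)
            else [])"

declare G.simps[simp del]

fun H :: "nat \<Rightarrow> nat \<Rightarrow> bool list list" where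
  "H r m = (if r = 0 then ones_row (2^m)
            else if r = m then ident (2^m)
            else if r + 1 = m then G r m
            else if r < m then
              (let A = H r (m-1); B = H (r-1) (m-1); Z = replicate (2^(m-1)) False in
                 map (\<lambda>x. x @ x) A @ map (\<lambda>y. Z @ y) B @ map (\<lambda>y. y @ Z) B)
            else [])"

declare H.simps[simp del]

end

theory Submission
  imports Defs
begin

lemma lenG: "length (G m (Suc m)) = 2^(Suc m) - 1"
proof (induction m)
  case 0
  then show ?case by (simp add: G.simps ones_row_def)
next
  case (Suc m)
  have "G (Suc m) (Suc (Suc m)) = map (\<lambda>x. x @ x) (G (Suc m) (Suc m)) @
        map (\<lambda>y. replicate (2^(Suc m)) False @ y) (G m (Suc m))"
    by (simp add: G.simps[of "Suc m" "Suc (Suc m)"] Let_def)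
  moreover have "G (Suc m) (Suc m) = ident (2^Suc m)" by (simp add: G.simps)
  ultimately show ?case using Suc by (simp add: ident_def)
qed

definition f :: "nat \<Rightarrow> nat \<Rightarrow> nat" where
  "f k r = (\<Sum>i\<le>r. ((k + i) choose i) * 2^i)"

lemma f_rec: "f (Suc k) (Suc r) = f k (Suc r) + 2 * f (Suc k) r"
proof -
  have "f (Suc k) (Suc r) = 1 + (\<Sum>i<Suc r. ((Suc k + Suc i) choose Suc i) * 2^Suc i)"
    unfolding f_def by (subst sum.atMost_Suc_shift) (simp add: lessThan_Suc_atMost del: sum.lessThan_Suc)
  also have "\<dots> = 1 + (\<Sum>i<Suc r. ((k + Suc i) choose Suc i) * 2^Suc i)
       + (\<Sum>i<Suc r. ((Suc k + i) choose i) * 2^Suc i)"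
  proof -
    have "\<And>i. ((Suc k + Suc i) choose Suc i) * 2^Suc i = ((k + Suc i) choose Suc i) * 2^Suc i + ((Suc k + i) choose i) * 2^Suc i"
      by (simp add: algebra_simps)
    then show ?thesis by (simp add: sum.distrib)
  qed
  also have "(\<Sum>i<Suc r. ((Suc k + i) choose i) * 2^Suc i) = 2 * f (Suc k) r"
    unfolding f_def by (simp add: sum_distrib_left lessThan_Suc_atMost mult.commute mult.left_commute)
  also have "1 + (\<Sum>i<Suc r. ((k + Suc i) choose Suc i) * 2^Suc i) = f k (Suc r)"
    unfolding f_def by (subst sum.atMost_Suc_shift) (simp add: lessThan_Suc_atMost del: sum.lessThan_Suc)
  finally show ?thesis by simp
qed

lemma f_top: "f 0 r = 2^(Suc r) - 1"
proof (induction r)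
  case 0 then show ?case by (simp add: f_def)
next
  case (Suc r)
  have "f 0 (Suc r) = f 0 r + 2^Suc r" by (simp add: f_def)
  then show ?case using Suc by simp
qed

lemma lenH: "r < m \<Longrightarrow> length (H r m) = f (m - r - 1) r"
proof (induction m arbitrary: r)
  case 0 then show ?case by simp
next
  case (Suc m)
  show ?case
  proof (cases "r = 0")
    case True
    then show ?thesis by (simp add: H.simps ones_row_def f_def)
  next
    case False
    show ?thesis
    proof (cases "r = m")
      case True
      then obtain k where m: "m = Suc k" using False by (cases m) auto
      have "H r (Suc m) = G r (Suc m)" using True False by (simp add: H.simps)
      then show ?thesis using True m lenG[of m] f_top[of m] by simp
    next
      case False2: False
      then have rm: "r < m" using Suc.prems by simp
      obtain r' where r': "r = Suc r'" using False by (cases r) auto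
      obtain k where k: "m - r - 1 = k" "m - r' - 1 = Suc k" using rm r' by auto
      have "H r (Suc m) = map (\<lambda>x. x @ x) (H r m) @ map (\<lambda>y. replicate (2^m) False @ y) (H r' m)
            @ map (\<lambda>y. y @ replicate (2^m) False) (H r' m)"
        using rm unfolding r' by (subst H.simps) (simp add: Let_def)
      then have "length (H r (Suc m)) = length (H r m) + 2 * length (H r' m)" by simp
      also have "\<dots> = f k r + 2 * f (Suc k) r'"
        using Suc.IH[of r] Suc.IH[of r'] rm r' k by simp
      also have "\<dots> = f (Suc k) r" using f_rec r' by simp
      moreover have "m - r = Suc k" using k rm by arith
      ultimately show ?thesis by simp
    qed
  qed
qed

theorem lemma13:
  fixes m r :: nat
  assumes "0 < m" and "r < m"
  shows "length (H r m) = (\<Sum>i\<le>r. ((m - r - 1 + i) choose i) * 2^i)"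
  using lenH[OF assms(2)] by (simp add: f_def)

end
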